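(* Assume a meet constraint structure $(\Psi_d)_d$ with a compatibility relation $\epsilon$ that distributes over $\wedge$ and is equipped with a witness builder $\beta$, and a constraint-producing predicate $(\models^d)_d$ related to a ground validity predicate $\models$. If $\vdash^{d}\Gamma\to\sigma$ is derivable in DI and $\sigma$ is satisfiable (i.e. there exists $\rho\in\mathrm{Inst}(d)$ with $\rho\,\epsilon\,\sigma$), then $\vdash\mathrm{fold}(\sigma)(\Gamma)$ is derivable in LK1.
   Context: Formulas are first-order formulas in negation normal form, built from literals (atoms and negated atoms) using $\wedge,\vee,\forall,\exists$. Eigenvariables (written $\bar x$) and meta-variables (written $X$) are two disjoint infinite supplies of variables. Domains: there is an initial domain $d_0$ (declaring some eigenvariables and no meta-variable); for a domain $d$ and an eigenvariable $\bar x$ (resp. meta-variable $X$) not declared in $d$, $d;\bar x$ (resp. $d;X$) is a domain declaring additionally $\bar x$ (resp. $X$); all domains arise this way. A term (resp. formula) of domain $d$ is one whose (free) variables are all eigenvariables or meta-variables declared in $d$; it is ground if it contains no meta-variable; a context of domain $d$ is a finite multiset of formulas of domain $d$. $T_d$ is the set of ground terms of domain $d$. The set $\mathrm{Inst}(d)$ of instantiations of domain $d$ is defined by $\mathrm{Inst}(d_0)=\{\emptyset\}$, $\mathrm{Inst}(d;\bar x)=\mathrm{Inst}(d)$, $\mathrm{Inst}(d;X)=\{(X\mapsto t,\rho)\mid t\in T_d,\ \rho\in\mathrm{Inst}(d)\}$; for $\rho\in\mathrm{Inst}(d)$, $\rho(t),\rho(A),\rho(\Gamma)$ denote the result of replacing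 each meta-variable of $d$ by its image under $\rho$. For a context $\Gamma$, $\Gamma_{lit}$ is the set of literals that are elements of $\Gamma$. A ground validity predicate $\models$ is a predicate on sets of ground literals. System LK1 derives sequents $\vdash\Gamma$ ($\Gamma$ a set of formulas without meta-variables) by the rules: $\vdash\Gamma$ if $\models\Gamma_{lit}$; from $\vdash\Gamma,A$ and $\vdash\Gamma,B$ infer $\vdash\Gamma,A\wedge B$; from $\vdash\Gamma,A,B$ infer $\vdash\Gamma,A\vee B$; from $\vdash\Gamma,A[x:=t],\exists xA$ infer $\vdash\Gamma,\exists xA$ ($t$ any term without meta-variables); from $\vdash\Gamma,A[x:=\bar x]$ infer $\vdash\Gamma,\forall xA$ with $\bar x$ a fresh eigenvariable. A constraint structure consists of a set $\Psi_d$ (constraints of domain $d$) for each domain $d$, with $\Psi_{d;\bar x}=\Psi_d$, and projection maps $\Psi_{d;X}\to\Psi_d$, $\sigma\mapsto\sigma_\downarrow$. A meet constraint structure additionally has a binary operation $\wedge$ on each $\Psi_d$. A compatibility relation is a family of relations $\rho\,\epsilon\,\sigma$ between $\rho\in\mathrm{Inst}(d)$ and $\sigma\in\Psi_d$ satisfying (A_proj): for all $\sigma\in\Psi_{d;X}$, $t\in T_d$, $\rho\in\mathrm{Inst}(d)$, $(X\mapsto t,\rho)\,\epsilon\,\sigma$ implies $\rho\,\epsilon\,\sigma_\downarrow$. It distributes over $\wedge$ if (A_meet): for all $\sigma,\sigma'\in\Psi_d$, $\rho\in\mathrm{Inst}(d)$, ($\rho\,\epsilon\,\sigma$ and $\rho\,\epsilon\,\sigma'$)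 iff $\rho\,\epsilon\,(\sigma\wedge\sigma')$. A witness builder assigns to every $\sigma\in\Psi_{d;X}$ a function $\beta_\sigma:\mathrm{Inst}(d)\to T_d$ such that (A_witness): for all $\rho\in\mathrm{Inst}(d)$, $\rho\,\epsilon\,\sigma_\downarrow$ implies $(X\mapsto\beta_\sigma(\rho),\rho)\,\epsilon\,\sigma$. The fold of $\sigma\in\Psi_d$ is the instantiation $\mathrm{fold}(\sigma)\in\mathrm{Inst}(d)$ defined by induction on $d$: $\mathrm{fold}(\sigma)=\emptyset$ if $d=d_0$; for $d=d';\bar x$, $\mathrm{fold}(\sigma)$ is the fold of $\sigma$ viewed in $\Psi_{d'}$; and $\mathrm{fold}(\sigma)=(X\mapsto\beta_\sigma(\mathrm{fold}(\sigma_\downarrow)),\ \mathrm{fold}(\sigma_\downarrow))$ if $d=d';X$. A constraint-producing predicate is a family of relations $\mathcal A\models^d\sigma$ between sets $\mathcal A$ of literals of domain $d$ and $\sigma\in\Psi_d$. It relates to $\models$ if (A_pg): for every domain $d$ and set $\mathcal A$ of literals of domain $d$, $\{\rho\in\mathrm{Inst}(d)\mid\ \models\rho(\mathcal A)\}=\bigcup_{\sigma:\ \mathcal A\models^d\sigma}\{\rho\in\mathrm{Inst}(d)\mid\rho\,\epsilon\,\sigma\}$. System DI derives sequents $\vdash^d\Gamma\to\sigma$ ($\Gamma$ a context and $\sigma$ a constraint, both of domain $d$) by the rules: $\vdash^d\Gamma\to\sigma$ if $\Gamma_{lit}\models^d\sigma$; from $\vdash^d\Gamma,A\to\sigma$ and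 $\vdash^d\Gamma,B\to\sigma'$ infer $\vdash^d\Gamma,A\wedge B\to\sigma\wedge\sigma'$; from $\vdash^d\Gamma,A,B\to\sigma$ infer $\vdash^d\Gamma,A\vee B\to\sigma$; from $\vdash^{d;X}\Gamma,A[x:=X],\exists xA\to\sigma$ ($X$ a fresh meta-variable) infer $\vdash^d\Gamma,\exists xA\to\sigma_\downarrow$; from $\vdash^{d;\bar x}\Gamma,A[x:=\bar x]\to\sigma$ ($\bar x$ a fresh eigenvariable) infer $\vdash^d\Gamma,\forall xA\to\sigma$. *)

theory Defs
  imports Main "HOL-Library.Multiset"
begin

datatype var = Eig nat | Meta nat | Bnd nat

datatype 'f trm = Var var | Fn 'f "'f trm list"

text \<open>Formulas in negation normal form: a literal is an atom (polarity True)
  or a negated atom (polarity False).\<close>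
datatype ('p, 'f) fm =
    Lit bool 'p "'f trm list"
  | Conj "('p, 'f) fm" "('p, 'f) fm"
  | Disj "('p, 'f) fm" "('p, 'f) fm"
  | Forall nat "('p, 'f) fm"
  | Exists nat "('p, 'f) fm"

fun tvars :: "'f trm \<Rightarrow> var set" where
  "tvars (Var v) = {v}"
| "tvars (Fn f ts) = \<Union> (set (map tvars ts))"

fun fvars :: "('p, 'f) fm \<Rightarrow> var set" where
  "fvars (Lit b p ts) = \<Union> (set (map tvars ts))"
| "fvars (Conj A B) = fvars A \<union> fvars B"
| "fvars (Disj A B) = fvars A \<union> fvars B"
| "fvars (Forall x A) = fvars A - {Bnd x}"
| "fvars (Exists x A) = fvars A - {Bnd x}"

fun tsubst :: "(var \<Rightarrow> 'f trm) \<Rightarrow> 'f trm \<Rightarrow> 'f trm" where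
  "tsubst s (Var v) = s v"
| "tsubst s (Fn f ts) = Fn f (map (tsubst s) ts)"

text \<open>Substitution of free variables (only ever used with substituted terms containing
  no bound variables, so no capture can occur).\<close>
fun fsubst :: "(var \<Rightarrow> 'f trm) \<Rightarrow> ('p, 'f) fm \<Rightarrow> ('p, 'f) fm" where
  "fsubst s (Lit b p ts) = Lit b p (map (tsubst s) ts)"
| "fsubst s (Conj A B) = Conj (fsubst s A) (fsubst s B)"
| "fsubst s (Disj A B) = Disj (fsubst s A) (fsubst s B)"
| "fsubst s (Forall x A) = Forall x (fsubst (s(Bnd x := Var (Bnd x))) A)"
| "fsubst s (Exists x A) = Exists x (fsubst (s(Bnd x := Var (Bnd x))) A)"

definition subst1 :: "('p, 'f) fm \<Rightarrow> nat \<Rightarrow> 'f trm \<Rightarrow> ('p, 'f) fm" where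
  "subst1 A x t = fsubst (Var(Bnd x := t)) A"

fun is_lit :: "('p, 'f) fm \<Rightarrow> bool" where
  "is_lit (Lit b p ts) = True"
| "is_lit _ = False"

definition lits :: "('p, 'f) fm set \<Rightarrow> ('p, 'f) fm set" where
  "lits \<Gamma> = {A \<in> \<Gamma>. is_lit A}"

definition no_meta :: "var set \<Rightarrow> bool" where
  "no_meta V \<longleftrightarrow> (\<forall>X. Meta X \<notin> V)"

text \<open>A domain is the initial domain d0 (declaring the eigenvariables in the parameter set E0)
  extended by a list of declarations; the list is written with the most recent declaration
  first, so d;x corresponds to (DE x # d) and d;X to (DM X # d); d0 is [].\<close>
datatype decl = DE nat | DM nat

type_synonym domain = "decl list"

definition eigs_of :: "nat set \<Rightarrow> domain \<Rightarrow> nat set" where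
  "eigs_of E0 d = E0 \<union> {x. DE x \<in> set d}"

definition decl_vars :: "nat set \<Rightarrow> domain \<Rightarrow> var set" where
  "decl_vars E0 d = Eig ` eigs_of E0 d \<union> {Meta X | X. DM X \<in> set d}"

fun wf_dom :: "nat set \<Rightarrow> domain \<Rightarrow> bool" where
  "wf_dom E0 [] = True"
| "wf_dom E0 (DE x # d) = (wf_dom E0 d \<and> x \<notin> eigs_of E0 d)"
| "wf_dom E0 (DM X # d) = (wf_dom E0 d \<and> DM X \<notin> set d)"

definition fm_dom :: "nat set \<Rightarrow> domain \<Rightarrow> ('p, 'f) fm \<Rightarrow> bool" where
  "fm_dom E0 d A \<longleftrightarrow> fvars A \<subseteq> decl_vars E0 d"

definition ctx_dom :: "nat set \<Rightarrow> domain \<Rightarrow> ('p, 'f) fm multiset \<Rightarrow> bool" where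
  "ctx_dom E0 d \<Gamma> \<longleftrightarrow> (\<forall>A \<in># \<Gamma>. fm_dom E0 d A)"

definition gterms :: "nat set \<Rightarrow> domain \<Rightarrow> 'f trm set" where
  "gterms E0 d = {t. tvars t \<subseteq> Eig ` eigs_of E0 d}"

text \<open>Instantiations: (X \<mapsto> t, \<rho>) is represented as (X, t) # \<rho>.\<close>
type_synonym 'f inst = "(nat \<times> 'f trm) list"

fun Inst :: "nat set \<Rightarrow> domain \<Rightarrow> 'f inst set" where
  "Inst E0 [] = {[]}"
| "Inst E0 (DE x # d) = Inst E0 d"
| "Inst E0 (DM X # d) = {(X, t) # \<rho> | t \<rho>. t \<in> gterms E0 d \<and> \<rho> \<in> Inst E0 d}"

definition inst_map :: "'f inst \<Rightarrow> var \<Rightarrow> 'f trm" where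
  "inst_map \<rho> v = (case v of Meta X \<Rightarrow> (case map_of \<rho> X of Some t \<Rightarrow> t | None \<Rightarrow> Var v)
                            | _ \<Rightarrow> Var v)"

definition inst_fm :: "'f inst \<Rightarrow> ('p, 'f) fm \<Rightarrow> ('p, 'f) fm" where
  "inst_fm \<rho> A = fsubst (inst_map \<rho>) A"

inductive LK1 :: "(('p, 'f) fm set \<Rightarrow> bool) \<Rightarrow> ('p, 'f) fm set \<Rightarrow> bool"
  for valid :: "('p, 'f) fm set \<Rightarrow> bool" where
  LK1_ax: "(\<forall>A \<in> \<Gamma>. no_meta (fvars A)) \<Longrightarrow> valid (lits \<Gamma>) \<Longrightarrow> LK1 valid \<Gamma>"
| LK1_conj: "LK1 valid (insert A \<Gamma>) \<Longrightarrow> LK1 valid (insert B \<Gamma>) \<Longrightarrow> LK1 valid (insert (Conj A B) \<Gamma>)"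
| LK1_disj: "LK1 valid (insert A (insert B \<Gamma>)) \<Longrightarrow> LK1 valid (insert (Disj A B) \<Gamma>)"
| LK1_ex: "(\<forall>v \<in> tvars t. \<exists>y. v = Eig y) \<Longrightarrow>
           LK1 valid (insert (subst1 A x t) (insert (Exists x A) \<Gamma>)) \<Longrightarrow>
           LK1 valid (insert (Exists x A) \<Gamma>)"
| LK1_all: "Eig y \<notin> fvars (Forall x A) \<Longrightarrow> (\<forall>B \<in> \<Gamma>. Eig y \<notin> fvars B) \<Longrightarrow>
            LK1 valid (insert (subst1 A x (Var (Eig y))) \<Gamma>) \<Longrightarrow>
            LK1 valid (insert (Forall x A) \<Gamma>)"

text \<open>Parameters (all indexed by the domain): Psi d is the set \<Psi>_d of constraints;
  proj (DM X # d) is the projection \<Psi>_{d;X} \<rightarrow> \<Psi>_d; meet d is \<and> on \<Psi>_d;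
  eps d \<rho> \<sigma> is \<rho> \<epsilon> \<sigma>; beta (DM X # d) \<sigma> is \<beta>_\<sigma> for \<sigma> \<in> \<Psi>_{d;X};
  cp d \<A> \<sigma> is \<A> \<Turnstile>^d \<sigma>.\<close>

definition meet_constraint_structure ::
  "nat set \<Rightarrow> (domain \<Rightarrow> 'c set) \<Rightarrow> (domain \<Rightarrow> 'c \<Rightarrow> 'c) \<Rightarrow> (domain \<Rightarrow> 'c \<Rightarrow> 'c \<Rightarrow> 'c) \<Rightarrow> bool" where
  "meet_constraint_structure E0 Psi proj meet \<longleftrightarrow>
     (\<forall>d x. wf_dom E0 (DE x # d) \<longrightarrow> Psi (DE x # d) = Psi d) \<and>
     (\<forall>d X \<sigma>. wf_dom E0 (DM X # d) \<longrightarrow> \<sigma> \<in> Psi (DM X # d) \<longrightarrow> proj (DM X # d) \<sigma> \<in> Psi d) \<and>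
     (\<forall>d \<sigma> \<sigma>'. wf_dom E0 d \<longrightarrow> \<sigma> \<in> Psi d \<longrightarrow> \<sigma>' \<in> Psi d \<longrightarrow> meet d \<sigma> \<sigma>' \<in> Psi d)"

text \<open>Since \<Psi>_{d;x} = \<Psi>_d and Inst(d;x) = Inst(d), the compatibility relation of
  d;x is that of d.\<close>
definition compat_relation ::
  "nat set \<Rightarrow> (domain \<Rightarrow> 'c set) \<Rightarrow> (domain \<Rightarrow> 'c \<Rightarrow> 'c) \<Rightarrow> (domain \<Rightarrow> 'f inst \<Rightarrow> 'c \<Rightarrow> bool) \<Rightarrow> bool" where
  "compat_relation E0 Psi proj eps \<longleftrightarrow>
     (\<forall>d x \<rho> \<sigma>. wf_dom E0 (DE x # d) \<longrightarrow> \<rho> \<in> Inst E0 d \<longrightarrow> \<sigma> \<in> Psi d \<longrightarrow>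
        (eps (DE x # d) \<rho> \<sigma> \<longleftrightarrow> eps d \<rho> \<sigma>)) \<and>
     \<comment> \<open>(A_proj)\<close>
     (\<forall>d X \<sigma> t \<rho>. wf_dom E0 (DM X # d) \<longrightarrow> \<sigma> \<in> Psi (DM X # d) \<longrightarrow> t \<in> gterms E0 d \<longrightarrow>
        \<rho> \<in> Inst E0 d \<longrightarrow> eps (DM X # d) ((X, t) # \<rho>) \<sigma> \<longrightarrow> eps d \<rho> (proj (DM X # d) \<sigma>))"

text \<open>(A_meet)\<close>
definition distributes_over_meet ::
  "nat set \<Rightarrow> (domain \<Rightarrow> 'c set) \<Rightarrow> (domain \<Rightarrow> 'c \<Rightarrow> 'c \<Rightarrow> 'c) \<Rightarrow> (domain \<Rightarrow> 'f inst \<Rightarrow> 'c \<Rightarrow> bool) \<Rightarrow> bool" where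
  "distributes_over_meet E0 Psi meet eps \<longleftrightarrow>
     (\<forall>d \<sigma> \<sigma>' \<rho>. wf_dom E0 d \<longrightarrow> \<sigma> \<in> Psi d \<longrightarrow> \<sigma>' \<in> Psi d \<longrightarrow> \<rho> \<in> Inst E0 d \<longrightarrow>
        ((eps d \<rho> \<sigma> \<and> eps d \<rho> \<sigma>') \<longleftrightarrow> eps d \<rho> (meet d \<sigma> \<sigma>')))"

text \<open>Witness builder: \<beta>_\<sigma> : Inst(d) \<rightarrow> T_d satisfying (A_witness).\<close>
definition witness_builder ::
  "nat set \<Rightarrow> (domain \<Rightarrow> 'c set) \<Rightarrow> (domain \<Rightarrow> 'c \<Rightarrow> 'c) \<Rightarrow> (domain \<Rightarrow> 'f inst \<Rightarrow> 'c \<Rightarrow> bool)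
     \<Rightarrow> (domain \<Rightarrow> 'c \<Rightarrow> 'f inst \<Rightarrow> 'f trm) \<Rightarrow> bool" where
  "witness_builder E0 Psi proj eps beta \<longleftrightarrow>
     (\<forall>d X \<sigma> \<rho>. wf_dom E0 (DM X # d) \<longrightarrow> \<sigma> \<in> Psi (DM X # d) \<longrightarrow> \<rho> \<in> Inst E0 d \<longrightarrow>
        beta (DM X # d) \<sigma> \<rho> \<in> gterms E0 d \<and>
        (eps d \<rho> (proj (DM X # d) \<sigma>) \<longrightarrow> eps (DM X # d) ((X, beta (DM X # d) \<sigma> \<rho>) # \<rho>) \<sigma>))"

fun fold_c :: "(domain \<Rightarrow> 'c \<Rightarrow> 'c) \<Rightarrow> (domain \<Rightarrow> 'c \<Rightarrow> 'f inst \<Rightarrow> 'f trm) \<Rightarrow> domain \<Rightarrow> 'c \<Rightarrow> 'f inst" where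
  "fold_c proj beta [] \<sigma> = []"
| "fold_c proj beta (DE x # d) \<sigma> = fold_c proj beta d \<sigma>"
| "fold_c proj beta (DM X # d) \<sigma> =
     (let \<rho> = fold_c proj beta d (proj (DM X # d) \<sigma>) in (X, beta (DM X # d) \<sigma> \<rho>) # \<rho>)"

text \<open>(A_pg): the constraint-producing predicate relates to the ground validity predicate.\<close>
definition relates_to ::
  "nat set \<Rightarrow> (domain \<Rightarrow> 'c set) \<Rightarrow> (domain \<Rightarrow> 'f inst \<Rightarrow> 'c \<Rightarrow> bool)
     \<Rightarrow> (domain \<Rightarrow> ('p, 'f) fm set \<Rightarrow> 'c \<Rightarrow> bool) \<Rightarrow> (('p, 'f) fm set \<Rightarrow> bool) \<Rightarrow> bool" where
  "relates_to E0 Psi eps cp valid \<longleftrightarrow>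
     (\<forall>d \<A>. wf_dom E0 d \<longrightarrow> (\<forall>A \<in> \<A>. is_lit A \<and> fm_dom E0 d A) \<longrightarrow>
        {\<rho> \<in> Inst E0 d. valid (inst_fm \<rho> ` \<A>)}
          = (\<Union>\<sigma> \<in> {\<sigma> \<in> Psi d. cp d \<A> \<sigma>}. {\<rho> \<in> Inst E0 d. eps d \<rho> \<sigma>}))"

inductive DI :: "nat set \<Rightarrow> (domain \<Rightarrow> 'c set) \<Rightarrow> (domain \<Rightarrow> 'c \<Rightarrow> 'c) \<Rightarrow> (domain \<Rightarrow> 'c \<Rightarrow> 'c \<Rightarrow> 'c)
    \<Rightarrow> (domain \<Rightarrow> ('p, 'f) fm set \<Rightarrow> 'c \<Rightarrow> bool) \<Rightarrow> domain \<Rightarrow> ('p, 'f) fm multiset \<Rightarrow> 'c \<Rightarrow> bool"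
  for E0 Psi proj meet cp where
  DI_ax: "wf_dom E0 d \<Longrightarrow> ctx_dom E0 d \<Gamma> \<Longrightarrow> \<sigma> \<in> Psi d \<Longrightarrow> cp d (lits (set_mset \<Gamma>)) \<sigma> \<Longrightarrow>
          DI E0 Psi proj meet cp d \<Gamma> \<sigma>"
| DI_conj: "DI E0 Psi proj meet cp d (\<Gamma> + {#A#}) \<sigma> \<Longrightarrow> DI E0 Psi proj meet cp d (\<Gamma> + {#B#}) \<sigma>' \<Longrightarrow>
            DI E0 Psi proj meet cp d (\<Gamma> + {#Conj A B#}) (meet d \<sigma> \<sigma>')"
| DI_disj: "DI E0 Psi proj meet cp d (\<Gamma> + {#A, B#}) \<sigma> \<Longrightarrow>
            DI E0 Psi proj meet cp d (\<Gamma> + {#Disj A B#}) \<sigma>"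
| DI_ex: "wf_dom E0 (DM X # d) \<Longrightarrow> ctx_dom E0 d (\<Gamma> + {#Exists x A#}) \<Longrightarrow>
          DI E0 Psi proj meet cp (DM X # d) (\<Gamma> + {#subst1 A x (Var (Meta X)), Exists x A#}) \<sigma> \<Longrightarrow>
          DI E0 Psi proj meet cp d (\<Gamma> + {#Exists x A#}) (proj (DM X # d) \<sigma>)"
| DI_all: "wf_dom E0 (DE y # d) \<Longrightarrow> ctx_dom E0 d (\<Gamma> + {#Forall x A#}) \<Longrightarrow>
           DI E0 Psi proj meet cp (DE y # d) (\<Gamma> + {#subst1 A x (Var (Eig y))#}) \<sigma> \<Longrightarrow>
           DI E0 Psi proj meet cp d (\<Gamma> + {#Forall x A#}) \<sigma>"

end

theory Submission
  imports Defs
begin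

lemma tsubst_cong: "(\<forall>v\<in>tvars t. s v = s' v) \<Longrightarrow> tsubst s t = tsubst s' t"
  by (induction t) auto

lemma tsubst_Var: "tsubst Var t = t"
  by (induction t) (auto simp: map_idI)

lemma tvars_tsubst: "tvars (tsubst s t) = (\<Union>v\<in>tvars t. tvars (s v))"
  by (induction t) auto

lemma tsubst_comp: "tsubst s (tsubst s' t) = tsubst (\<lambda>v. tsubst s (s' v)) t"
  by (induction t) auto

lemma fsubst_cong: "(\<forall>v\<in>fvars A. s v = s' v) \<Longrightarrow> fsubst s A = fsubst s' A"
proof (induction A arbitrary: s s')
  case (Lit b p ts) then show ?case by (auto intro: tsubst_cong)
next
  case (Conj A B) then show ?case by simp
next
  case (Disj A B) then show ?case by simp
next
  case (Forall x A)
  have "fsubst (s(Bnd x := Var (Bnd x))) A = fsubst (s'(Bnd x := Var (Bnd x))) A"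
    by (rule Forall.IH) (use Forall.prems in auto)
  then show ?case by simp
next
  case (Exists x A)
  have "fsubst (s(Bnd x := Var (Bnd x))) A = fsubst (s'(Bnd x := Var (Bnd x))) A"
    by (rule Exists.IH) (use Exists.prems in auto)
  then show ?case by simp
qed

lemma fvars_fsubst: "fvars (fsubst s A) \<subseteq> (\<Union>v\<in>fvars A. tvars (s v))"
proof (induction A arbitrary: s)
  case (Lit b p ts) then show ?case by (auto simp: tvars_tsubst)
next
  case (Conj A B)
  have "fvars (fsubst s A) \<subseteq> (\<Union>v\<in>fvars A. tvars (s v))" "fvars (fsubst s B) \<subseteq> (\<Union>v\<in>fvars B. tvars (s v))"
    by (rule Conj.IH)+
  then show ?case by auto
next
  case (Disj A B)
  have "fvars (fsubst s A) \<subseteq> (\<Union>v\<in>fvars A. tvars (s v))" "fvars (fsubst s B) \<subseteq> (\<Union>v\<in>fvars B. tvars (s v))"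
    by (rule Disj.IH)+
  then show ?case by auto
next
  case (Forall x A)
  show ?case
  proof
    fix w assume "w \<in> fvars (fsubst s (Forall x A))"
    then have w: "w \<in> fvars (fsubst (s(Bnd x := Var (Bnd x))) A)" "w \<noteq> Bnd x" by auto
    then obtain v where v: "v \<in> fvars A" "w \<in> tvars ((s(Bnd x := Var (Bnd x))) v)"
      using Forall.IH[of "s(Bnd x := Var (Bnd x))"] by blast
    show "w \<in> (\<Union>v\<in>fvars (Forall x A). tvars (s v))"
    proof (cases "v = Bnd x")
      case True then show ?thesis using v w by simp
    next
      case False then show ?thesis using v w by auto
    qed
  qed
next
  case (Exists x A)
  show ?case
  proof
    fix w assume "w \<in> fvars (fsubst s (Exists x A))"
    then have w: "w \<in> fvars (fsubst (s(Bnd x := Var (Bnd x))) A)" "w \<noteq> Bnd x" by auto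
    then obtain v where v: "v \<in> fvars A" "w \<in> tvars ((s(Bnd x := Var (Bnd x))) v)"
      using Exists.IH[of "s(Bnd x := Var (Bnd x))"] by blast
    show "w \<in> (\<Union>v\<in>fvars (Exists x A). tvars (s v))"
    proof (cases "v = Bnd x")
      case True then show ?thesis using v w by simp
    next
      case False then show ?thesis using v w by auto
    qed
  qed
qed

definition goods :: "(var \<Rightarrow> 'f trm) \<Rightarrow> bool" where
  "goods s \<longleftrightarrow> (\<forall>v. (\<exists>b. v = Bnd b \<and> s v = Var v) \<or> (\<forall>b. Bnd b \<notin> tvars (s v)))"

lemma goods_upd: "goods s \<Longrightarrow> goods (s(Bnd x := Var (Bnd x)))"
  unfolding goods_def by auto

lemma comp_upd:
  assumes "goods s'"
  shows "(\<lambda>v. tsubst (s(Bnd x := Var (Bnd x))) ((s'(Bnd x := Var (Bnd x))) v))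
       = (\<lambda>v. tsubst s (s' v))(Bnd x := Var (Bnd x))"
proof
  fix v
  show "tsubst (s(Bnd x := Var (Bnd x))) ((s'(Bnd x := Var (Bnd x))) v)
       = ((\<lambda>v. tsubst s (s' v))(Bnd x := Var (Bnd x))) v"
  proof (cases "v = Bnd x")
    case True then show ?thesis by simp
  next
    case False
    from assms have "(\<exists>b. v = Bnd b \<and> s' v = Var v) \<or> (\<forall>b. Bnd b \<notin> tvars (s' v))"
      unfolding goods_def by blast
    then show ?thesis
    proof
      assume "\<exists>b. v = Bnd b \<and> s' v = Var v" then show ?thesis using False by auto
    next
      assume "\<forall>b. Bnd b \<notin> tvars (s' v)"
      then show ?thesis using False by (auto intro!: tsubst_cong)
    qed
  qed
qed

lemma fsubst_comp: "goods s' \<Longrightarrow> fsubst s (fsubst s' A) = fsubst (\<lambda>v. tsubst s (s' v)) A"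
proof (induction A arbitrary: s s')
  case (Lit b p ts) then show ?case by (simp add: tsubst_comp)
next
  case (Forall x A)
  have "fsubst s (fsubst s' (Forall x A)) = Forall x (fsubst (s(Bnd x := Var (Bnd x))) (fsubst (s'(Bnd x := Var (Bnd x))) A))"
    by simp
  also have "\<dots> = Forall x (fsubst (\<lambda>v. tsubst (s(Bnd x := Var (Bnd x))) ((s'(Bnd x := Var (Bnd x))) v)) A)"
    using Forall.IH[OF goods_upd[OF Forall.prems]] by (simp only:)
  also have "\<dots> = Forall x (fsubst ((\<lambda>v. tsubst s (s' v))(Bnd x := Var (Bnd x))) A)"
    by (simp only: comp_upd[OF Forall.prems])
  finally show ?case by simp
next
  case (Exists x A)
  have "fsubst s (fsubst s' (Exists x A)) = Exists x (fsubst (s(Bnd x := Var (Bnd x))) (fsubst (s'(Bnd x := Var (Bnd x))) A))"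
    by simp
  also have "\<dots> = Exists x (fsubst (\<lambda>v. tsubst (s(Bnd x := Var (Bnd x))) ((s'(Bnd x := Var (Bnd x))) v)) A)"
    using Exists.IH[OF goods_upd[OF Exists.prems]] by (simp only:)
  also have "\<dots> = Exists x (fsubst ((\<lambda>v. tsubst s (s' v))(Bnd x := Var (Bnd x))) A)"
    by (simp only: comp_upd[OF Exists.prems])
  finally show ?case by simp
qed auto

lemma goods_Var: "(\<forall>b. Bnd b \<notin> tvars t) \<Longrightarrow> goods (Var(Bnd x := t))"
  unfolding goods_def by auto

definition groundI :: "'f inst \<Rightarrow> bool" where
  "groundI \<rho> \<longleftrightarrow> (\<forall>Y u. (Y, u) \<in> set \<rho> \<longrightarrow> (\<forall>v\<in>tvars u. \<exists>e. v = Eig e))"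

lemma inst_map_cases:
  "groundI \<rho> \<Longrightarrow> inst_map \<rho> v = Var v \<or> (\<forall>w\<in>tvars (inst_map \<rho> v). \<exists>e. w = Eig e)"
  unfolding groundI_def inst_map_def
  by (auto split: var.splits option.splits dest!: map_of_SomeD)

lemma goods_inst: "groundI \<rho> \<Longrightarrow> goods (inst_map \<rho>)"
proof -
  assume g: "groundI \<rho>"
  show ?thesis unfolding goods_def
  proof
    fix v
    show "(\<exists>b. v = Bnd b \<and> inst_map \<rho> v = Var v) \<or> (\<forall>b. Bnd b \<notin> tvars (inst_map \<rho> v))"
      using inst_map_cases[OF g, of v]
      by (cases v) (auto simp: inst_map_def)
  qed
qed

lemma tsubst_ground: "(\<forall>w\<in>tvars u. \<exists>e. w = Eig e) \<Longrightarrow> tsubst (Var(Bnd x := t)) u = u"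
  using tsubst_cong[of u "Var(Bnd x := t)" Var] tsubst_Var by fastforce

lemma inst_subst1_eig:
  assumes g: "groundI \<rho>"
  shows "inst_fm \<rho> (subst1 A x (Var (Eig y))) = subst1 (inst_fm \<rho> A) x (Var (Eig y))"
proof -
  have "inst_fm \<rho> (subst1 A x (Var (Eig y))) = fsubst (\<lambda>v. tsubst (inst_map \<rho>) ((Var(Bnd x := Var (Eig y))) v)) A"
    unfolding inst_fm_def subst1_def by (rule fsubst_comp) (rule goods_Var, simp)
  also have "\<dots> = fsubst (\<lambda>v. tsubst (Var(Bnd x := Var (Eig y))) (inst_map \<rho> v)) A"
  proof (rule fsubst_cong, intro ballI)
    fix v
    show "tsubst (inst_map \<rho>) ((Var(Bnd x := Var (Eig y))) v) = tsubst (Var(Bnd x := Var (Eig y))) (inst_map \<rho> v)"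
    proof (cases "v = Bnd x")
      case True then show ?thesis by (simp add: inst_map_def)
    next
      case False
      show ?thesis
        using inst_map_cases[OF g, of v] False tsubst_ground[of "inst_map \<rho> v" x]
        by (cases v) (auto simp: inst_map_def)
    qed
  qed
  also have "\<dots> = subst1 (inst_fm \<rho> A) x (Var (Eig y))"
    unfolding inst_fm_def subst1_def by (rule fsubst_comp[symmetric]) (rule goods_inst[OF g])
  finally show ?thesis .
qed

lemma inst_subst1_meta:
  assumes g: "groundI \<rho>" and t: "\<forall>w\<in>tvars t. \<exists>e. w = Eig e" and X: "Meta X \<notin> fvars A"
  shows "inst_fm ((X, t) # \<rho>) (subst1 A x (Var (Meta X))) = subst1 (inst_fm \<rho> A) x t"
proof -
  have "inst_fm ((X, t) # \<rho>) (subst1 A x (Var (Meta X))) = fsubst (\<lambda>v. tsubst (inst_map ((X, t) # \<rho>)) ((Var(Bnd x := Var (Meta X))) v)) A"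
    unfolding inst_fm_def subst1_def by (rule fsubst_comp) (rule goods_Var, simp)
  also have "\<dots> = fsubst (\<lambda>v. tsubst (Var(Bnd x := t)) (inst_map \<rho> v)) A"
  proof (rule fsubst_cong, intro ballI)
    fix v assume v: "v \<in> fvars A"
    show "tsubst (inst_map ((X, t) # \<rho>)) ((Var(Bnd x := Var (Meta X))) v) = tsubst (Var(Bnd x := t)) (inst_map \<rho> v)"
    proof (cases "v = Bnd x")
      case True then show ?thesis by (simp add: inst_map_def)
    next
      case False
      have "v \<noteq> Meta X" using v X by auto
      then show ?thesis
        using inst_map_cases[OF g, of v] False tsubst_ground[of "inst_map \<rho> v" x t]
        by (cases v) (auto simp: inst_map_def)
    qed
  qed
  also have "\<dots> = subst1 (inst_fm \<rho> A) x t"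
    unfolding inst_fm_def subst1_def by (rule fsubst_comp[symmetric]) (rule goods_inst[OF g])
  finally show ?thesis .
qed

lemma inst_other: "Meta X \<notin> fvars B \<Longrightarrow> inst_fm ((X, t) # \<rho>) B = inst_fm \<rho> B"
  unfolding inst_fm_def
  by (rule fsubst_cong) (auto simp: inst_map_def split: var.splits)

lemma inst_Exists: "inst_fm \<rho> (Exists x A) = Exists x (inst_fm \<rho> A)"
proof -
  have "(inst_map \<rho>)(Bnd x := Var (Bnd x)) = inst_map \<rho>" by (auto simp: inst_map_def)
  then show ?thesis by (simp add: inst_fm_def)
qed

lemma inst_Forall: "inst_fm \<rho> (Forall x A) = Forall x (inst_fm \<rho> A)"
proof -
  have "(inst_map \<rho>)(Bnd x := Var (Bnd x)) = inst_map \<rho>" by (auto simp: inst_map_def)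
  then show ?thesis by (simp add: inst_fm_def)
qed

lemma inst_Conj: "inst_fm \<rho> (Conj A B) = Conj (inst_fm \<rho> A) (inst_fm \<rho> B)"
  by (simp add: inst_fm_def)

lemma inst_Disj: "inst_fm \<rho> (Disj A B) = Disj (inst_fm \<rho> A) (inst_fm \<rho> B)"
  by (simp add: inst_fm_def)

lemma is_lit_inst: "is_lit (inst_fm \<rho> A) = is_lit A"
  by (cases A) (auto simp: inst_fm_def)

lemma lits_inst: "lits (inst_fm \<rho> ` S) = inst_fm \<rho> ` lits S"
  unfolding lits_def by (auto simp: is_lit_inst)

lemma Inst_props:
  "\<rho> \<in> Inst E0 d \<Longrightarrow> (\<forall>Y u. (Y, u) \<in> set \<rho> \<longrightarrow> tvars u \<subseteq> Eig ` eigs_of E0 d)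
     \<and> (\<forall>X. DM X \<in> set d \<longrightarrow> map_of \<rho> X \<noteq> None)"
proof (induction d arbitrary: \<rho>)
  case Nil then show ?case by simp
next
  case (Cons a d)
  have mono: "eigs_of E0 d \<subseteq> eigs_of E0 (a # d)" by (auto simp: eigs_of_def)
  show ?case
  proof (cases a)
    case (DE x)
    then have r: "\<rho> \<in> Inst E0 d" using Cons.prems by simp
    note IH = Cons.IH[OF r]
    show ?thesis
    proof (intro conjI allI impI)
      fix Y u assume "(Y, u) \<in> set \<rho>"
      then have "tvars u \<subseteq> Eig ` eigs_of E0 d" using IH by blast
      then show "tvars u \<subseteq> Eig ` eigs_of E0 (a # d)" using mono by blast
    next
      fix Z assume "DM Z \<in> set (a # d)"
      then have "DM Z \<in> set d" using DE by simp
      then show "map_of \<rho> Z \<noteq> None" using IH by blast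
    qed
  next
    case (DM X)
    then obtain t \<rho>' where r: "\<rho> = (X, t) # \<rho>'" "t \<in> gterms E0 d" "\<rho>' \<in> Inst E0 d" using Cons.prems by auto
    note IH = Cons.IH[OF r(3)]
    show ?thesis
    proof (intro conjI allI impI)
      fix Y u assume yu: "(Y, u) \<in> set \<rho>"
      show "tvars u \<subseteq> Eig ` eigs_of E0 (a # d)"
      proof (cases "(Y, u) = (X, t)")
        case True then show ?thesis using r(2) mono unfolding gterms_def by auto
      next
        case False
        then have "(Y, u) \<in> set \<rho>'" using yu r(1) by auto
        then have "tvars u \<subseteq> Eig ` eigs_of E0 d" using IH by blast
        then show ?thesis using mono by blast
      qed
    next
      fix Z assume z: "DM Z \<in> set (a # d)"
      show "map_of \<rho> Z \<noteq> None"
      proof (cases "Z = X")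
        case True then show ?thesis using r(1) by simp
      next
        case False
        then have "DM Z \<in> set d" using z DM by simp
        then have "map_of \<rho>' Z \<noteq> None" using IH by blast
        then show ?thesis using r(1) False by simp
      qed
    qed
  qed
qed

lemma Inst_ground: "\<rho> \<in> Inst E0 d \<Longrightarrow> groundI \<rho>"
  using Inst_props unfolding groundI_def by blast

lemma tvars_inst_map:
  assumes "\<rho> \<in> Inst E0 d" "v \<in> decl_vars E0 d"
  shows "tvars (inst_map \<rho> v) \<subseteq> Eig ` eigs_of E0 d"
proof -
  have P1: "\<And>Y u. (Y, u) \<in> set \<rho> \<Longrightarrow> tvars u \<subseteq> Eig ` eigs_of E0 d"
    using Inst_props[OF assms(1)] by blast
  have P2: "\<And>X. DM X \<in> set d \<Longrightarrow> map_of \<rho> X \<noteq> None"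
    using Inst_props[OF assms(1)] by blast
  show ?thesis
  proof (cases v)
    case (Meta X)
    then have "DM X \<in> set d" using assms(2) by (auto simp: decl_vars_def)
    then obtain u where u: "map_of \<rho> X = Some u" using P2 by blast
    then have "(X, u) \<in> set \<rho>" by (rule map_of_SomeD)
    then have "tvars u \<subseteq> Eig ` eigs_of E0 d" by (rule P1)
    moreover have "inst_map \<rho> v = u" using u Meta by (simp add: inst_map_def)
    ultimately show ?thesis by simp
  next
    case (Eig e)
    then have "e \<in> eigs_of E0 d" using assms(2) by (auto simp: decl_vars_def)
    then show ?thesis using Eig by (simp add: inst_map_def)
  next
    case (Bnd b)
    then show ?thesis using assms(2) by (auto simp: decl_vars_def)
  qed
qed

lemma fvars_inst:
  assumes "\<rho> \<in> Inst E0 d" "fm_dom E0 d B"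
  shows "fvars (inst_fm \<rho> B) \<subseteq> Eig ` eigs_of E0 d"
proof
  fix w assume "w \<in> fvars (inst_fm \<rho> B)"
  then obtain v where v: "v \<in> fvars B" "w \<in> tvars (inst_map \<rho> v)"
    using fvars_fsubst[of "inst_map \<rho>" B] unfolding inst_fm_def by blast
  have "v \<in> decl_vars E0 d" using v(1) assms(2) unfolding fm_dom_def by blast
  then show "w \<in> Eig ` eigs_of E0 d" using tvars_inst_map[OF assms(1)] v(2) by blast
qed

lemma M_DE: "meet_constraint_structure E0 Psi proj meet \<Longrightarrow> wf_dom E0 (DE x # d) \<Longrightarrow> Psi (DE x # d) = Psi d"
  unfolding meet_constraint_structure_def by blast
lemma M_DM: "meet_constraint_structure E0 Psi proj meet \<Longrightarrow> wf_dom E0 (DM X # d) \<Longrightarrow> \<sigma> \<in> Psi (DM X # d) \<Longrightarrow> proj (DM X # d) \<sigma> \<in> Psi d"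
  unfolding meet_constraint_structure_def by blast
lemma M_meet: "meet_constraint_structure E0 Psi proj meet \<Longrightarrow> wf_dom E0 d \<Longrightarrow> \<sigma> \<in> Psi d \<Longrightarrow> \<sigma>' \<in> Psi d \<Longrightarrow> meet d \<sigma> \<sigma>' \<in> Psi d"
  unfolding meet_constraint_structure_def by blast
lemma C_DE: "compat_relation E0 Psi proj eps \<Longrightarrow> wf_dom E0 (DE x # d) \<Longrightarrow> \<rho> \<in> Inst E0 d \<Longrightarrow> \<sigma> \<in> Psi d \<Longrightarrow>
        (eps (DE x # d) \<rho> \<sigma> \<longleftrightarrow> eps d \<rho> \<sigma>)"
  unfolding compat_relation_def by blast
lemma C_proj: "compat_relation E0 Psi proj eps \<Longrightarrow> wf_dom E0 (DM X # d) \<Longrightarrow> \<sigma> \<in> Psi (DM X # d) \<Longrightarrow> t \<in> gterms E0 d \<Longrightarrow>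
        \<rho> \<in> Inst E0 d \<Longrightarrow> eps (DM X # d) ((X, t) # \<rho>) \<sigma> \<Longrightarrow> eps d \<rho> (proj (DM X # d) \<sigma>)"
  unfolding compat_relation_def by blast
lemma D_meet: "distributes_over_meet E0 Psi meet eps \<Longrightarrow> wf_dom E0 d \<Longrightarrow> \<sigma> \<in> Psi d \<Longrightarrow> \<sigma>' \<in> Psi d \<Longrightarrow> \<rho> \<in> Inst E0 d \<Longrightarrow>
        eps d \<rho> (meet d \<sigma> \<sigma>') \<Longrightarrow> eps d \<rho> \<sigma> \<and> eps d \<rho> \<sigma>'"
  unfolding distributes_over_meet_def by blast
lemma W_beta: "witness_builder E0 Psi proj eps beta \<Longrightarrow> wf_dom E0 (DM X # d) \<Longrightarrow> \<sigma> \<in> Psi (DM X # d) \<Longrightarrow> \<rho> \<in> Inst E0 d \<Longrightarrow>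
        beta (DM X # d) \<sigma> \<rho> \<in> gterms E0 d"
  unfolding witness_builder_def by blast
lemma W_eps: "witness_builder E0 Psi proj eps beta \<Longrightarrow> wf_dom E0 (DM X # d) \<Longrightarrow> \<sigma> \<in> Psi (DM X # d) \<Longrightarrow> \<rho> \<in> Inst E0 d \<Longrightarrow>
        eps d \<rho> (proj (DM X # d) \<sigma>) \<Longrightarrow> eps (DM X # d) ((X, beta (DM X # d) \<sigma> \<rho>) # \<rho>) \<sigma>"
  unfolding witness_builder_def by blast
lemma R_eq: "relates_to E0 Psi eps cp valid \<Longrightarrow> wf_dom E0 d \<Longrightarrow> (\<forall>A \<in> \<A>. is_lit A \<and> fm_dom E0 d A) \<Longrightarrow>
        {\<rho> \<in> Inst E0 d. valid (inst_fm \<rho> ` \<A>)}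
          = (\<Union>\<sigma> \<in> {\<sigma> \<in> Psi d. cp d \<A> \<sigma>}. {\<rho> \<in> Inst E0 d. eps d \<rho> \<sigma>})"
  unfolding relates_to_def by blast
lemma meta_decl: "Meta X \<in> decl_vars E0 d \<Longrightarrow> DM X \<in> set d"
  by (auto simp: decl_vars_def)

lemma DI_props:
  assumes M: "meet_constraint_structure E0 Psi proj meet"
  shows "DI E0 Psi proj meet cp d \<Gamma> \<sigma> \<Longrightarrow> wf_dom E0 d \<and> \<sigma> \<in> Psi d \<and> ctx_dom E0 d \<Gamma>"
proof (induction rule: DI.induct)
  case (DI_ax d \<Gamma> \<sigma>) then show ?case by simp
next
  case (DI_conj d \<Gamma> A \<sigma> B \<sigma>')
  then show ?case using M_meet[OF M] unfolding ctx_dom_def fm_dom_def by auto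
next
  case (DI_disj d \<Gamma> A B \<sigma>)
  then show ?case unfolding ctx_dom_def fm_dom_def by auto
next
  case (DI_ex X d \<Gamma> x A \<sigma>)
  then show ?case using M_DM[OF M] by auto
next
  case (DI_all y d \<Gamma> x A \<sigma>)
  then show ?case using M_DE[OF M] by auto
qed

lemma fold_lemma:
  assumes C: "compat_relation E0 Psi proj eps"
    and M: "meet_constraint_structure E0 Psi proj meet"
    and W: "witness_builder E0 Psi proj eps beta"
  shows "wf_dom E0 d \<Longrightarrow> \<sigma> \<in> Psi d \<Longrightarrow> \<rho> \<in> Inst E0 d \<Longrightarrow> eps d \<rho> \<sigma> \<Longrightarrow>
     fold_c proj beta d \<sigma> \<in> Inst E0 d \<and> eps d (fold_c proj beta d \<sigma>) \<sigma>"
proof (induction d arbitrary: \<sigma> \<rho>)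
  case Nil then show ?case by simp
next
  case (Cons a d)
  show ?case
  proof (cases a)
    case (DE x)
    have wf: "wf_dom E0 (DE x # d)" "wf_dom E0 d" using Cons.prems DE by auto
    have ps: "Psi (DE x # d) = Psi d" using M_DE[OF M wf(1)] .
    have s: "\<sigma> \<in> Psi d" using Cons.prems DE ps by simp
    have r: "\<rho> \<in> Inst E0 d" using Cons.prems DE by simp
    have e: "eps d \<rho> \<sigma>" using C_DE[OF C wf(1) r s] Cons.prems DE by simp
    have f: "fold_c proj beta d \<sigma> \<in> Inst E0 d" "eps d (fold_c proj beta d \<sigma>) \<sigma>"
      using Cons.IH[OF wf(2) s r e] by auto
    have "eps (DE x # d) (fold_c proj beta d \<sigma>) \<sigma>" using C_DE[OF C wf(1) f(1) s] f(2) by simp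
    then show ?thesis using DE f by simp
  next
    case (DM X)
    then obtain t \<rho>' where r: "\<rho> = (X, t) # \<rho>'" "t \<in> gterms E0 d" "\<rho>' \<in> Inst E0 d" using Cons.prems by auto
    have wf0: "wf_dom E0 (DM X # d)" using Cons.prems DM by simp
    have wf: "wf_dom E0 d" using Cons.prems DM by simp
    have s: "\<sigma> \<in> Psi (DM X # d)" using Cons.prems DM by simp
    have pp: "proj (DM X # d) \<sigma> \<in> Psi d" using M_DM[OF M wf0 s] .
    have ep: "eps d \<rho>' (proj (DM X # d) \<sigma>)" using C_proj[OF C wf0 s r(2) r(3)] Cons.prems DM r by simp
    define \<rho>0 where "\<rho>0 = fold_c proj beta d (proj (DM X # d) \<sigma>)"
    have ih: "\<rho>0 \<in> Inst E0 d" "eps d \<rho>0 (proj (DM X # d) \<sigma>)" using Cons.IH[OF wf pp r(3) ep] \<rho>0_def by auto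
    have w: "beta (DM X # d) \<sigma> \<rho>0 \<in> gterms E0 d" "eps (DM X # d) ((X, beta (DM X # d) \<sigma> \<rho>0) # \<rho>0) \<sigma>"
      using W_beta[OF W wf0 s ih(1)] W_eps[OF W wf0 s ih(1) ih(2)] by auto
    show ?thesis using w ih DM by (simp add: Let_def \<rho>0_def[symmetric])
  qed
qed

lemma DI_sound:
  assumes M: "meet_constraint_structure E0 Psi proj meet"
    and C: "compat_relation E0 Psi proj eps"
    and D: "distributes_over_meet E0 Psi meet eps"
    and W: "witness_builder E0 Psi proj eps beta"
    and R: "relates_to E0 Psi eps cp valid"
  shows "DI E0 Psi proj meet cp d \<Gamma> \<sigma> \<Longrightarrow>
     \<forall>\<rho>\<in>Inst E0 d. eps d \<rho> \<sigma> \<longrightarrow> LK1 valid (inst_fm \<rho> ` set_mset \<Gamma>)"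
proof (induction rule: DI.induct)
  case (DI_ax d \<Gamma> \<sigma>)
  show ?case
  proof (intro ballI impI)
    fix \<rho> assume \<rho>: "\<rho> \<in> Inst E0 d" and e: "eps d \<rho> \<sigma>"
    have "\<forall>A \<in> lits (set_mset \<Gamma>). is_lit A \<and> fm_dom E0 d A"
      using DI_ax.hyps(2) unfolding lits_def ctx_dom_def by auto
    note eq = R_eq[OF R DI_ax.hyps(1) this]
    have "\<rho> \<in> (\<Union>\<sigma> \<in> {\<sigma> \<in> Psi d. cp d (lits (set_mset \<Gamma>)) \<sigma>}. {\<rho> \<in> Inst E0 d. eps d \<rho> \<sigma>})"
      using \<rho> e DI_ax.hyps(3,4) by blast
    then have "\<rho> \<in> {\<rho> \<in> Inst E0 d. valid (inst_fm \<rho> ` lits (set_mset \<Gamma>))}" by (simp only: eq)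
    then have v: "valid (inst_fm \<rho> ` lits (set_mset \<Gamma>))" by simp
    show "LK1 valid (inst_fm \<rho> ` set_mset \<Gamma>)"
    proof (rule LK1_ax)
      show "\<forall>A\<in>inst_fm \<rho> ` set_mset \<Gamma>. no_meta (fvars A)"
        proof
        fix A assume "A \<in> inst_fm \<rho> ` set_mset \<Gamma>"
        then obtain B where B: "B \<in># \<Gamma>" "A = inst_fm \<rho> B" by auto
        have "fvars A \<subseteq> Eig ` eigs_of E0 d" using fvars_inst[OF \<rho>, of B] B DI_ax.hyps(2) unfolding ctx_dom_def by auto
        then show "no_meta (fvars A)" unfolding no_meta_def by auto
      qed
      show "valid (lits (inst_fm \<rho> ` set_mset \<Gamma>))" using v by (simp add: lits_inst)
    qed
  qed
next
  case (DI_conj d \<Gamma> A \<sigma> B \<sigma>')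
  have p1: "wf_dom E0 d" "\<sigma> \<in> Psi d" using DI_props[OF M DI_conj.hyps(1)] by auto
  have p2: "\<sigma>' \<in> Psi d" using DI_props[OF M DI_conj.hyps(2)] by auto
  show ?case
  proof (intro ballI impI)
    fix \<rho> assume \<rho>: "\<rho> \<in> Inst E0 d" and e: "eps d \<rho> (meet d \<sigma> \<sigma>')"
    have "eps d \<rho> \<sigma>" "eps d \<rho> \<sigma>'" using D_meet[OF D p1(1) p1(2) p2 \<rho> e] by auto
    then have "LK1 valid (insert (inst_fm \<rho> A) (inst_fm \<rho> ` set_mset \<Gamma>))"
              "LK1 valid (insert (inst_fm \<rho> B) (inst_fm \<rho> ` set_mset \<Gamma>))"
      using DI_conj.IH \<rho> by auto
    then have "LK1 valid (insert (Conj (inst_fm \<rho> A) (inst_fm \<rho> B)) (inst_fm \<rho> ` set_mset \<Gamma>))"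
      by (rule LK1_conj)
    then show "LK1 valid (inst_fm \<rho> ` set_mset (\<Gamma> + {#Conj A B#}))" by (simp add: inst_Conj)
  qed
next
  case (DI_disj d \<Gamma> A B \<sigma>)
  show ?case
  proof (intro ballI impI)
    fix \<rho> assume \<rho>: "\<rho> \<in> Inst E0 d" and e: "eps d \<rho> \<sigma>"
    then have "LK1 valid (insert (inst_fm \<rho> A) (insert (inst_fm \<rho> B) (inst_fm \<rho> ` set_mset \<Gamma>)))"
      using DI_disj.IH by auto
    then have "LK1 valid (insert (Disj (inst_fm \<rho> A) (inst_fm \<rho> B)) (inst_fm \<rho> ` set_mset \<Gamma>))"
      by (rule LK1_disj)
    then show "LK1 valid (inst_fm \<rho> ` set_mset (\<Gamma> + {#Disj A B#}))" by (simp add: inst_Disj)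
  qed
next
  case (DI_ex X d \<Gamma> x A \<sigma>)
  have sp: "\<sigma> \<in> Psi (DM X # d)" using DI_props[OF M DI_ex.hyps(3)] by auto
  have nX: "DM X \<notin> set d" using DI_ex.hyps(1) by simp
  have fvG: "\<forall>B \<in># \<Gamma> + {#Exists x A#}. Meta X \<notin> fvars B"
    using DI_ex.hyps(2) nX meta_decl unfolding ctx_dom_def fm_dom_def by blast
  then have nA: "Meta X \<notin> fvars A" by auto
  show ?case
  proof (intro ballI impI)
    fix \<rho> assume \<rho>: "\<rho> \<in> Inst E0 d" and e: "eps d \<rho> (proj (DM X # d) \<sigma>)"
    define t where "t = beta (DM X # d) \<sigma> \<rho>"
    have w: "t \<in> gterms E0 d" "eps (DM X # d) ((X, t) # \<rho>) \<sigma>"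
      using W_beta[OF W DI_ex.hyps(1) sp \<rho>] W_eps[OF W DI_ex.hyps(1) sp \<rho> e] unfolding t_def by auto
    have \<rho>': "(X, t) # \<rho> \<in> Inst E0 (DM X # d)" using w \<rho> by simp
    have tg: "\<forall>w\<in>tvars t. \<exists>e. w = Eig e" using w(1) unfolding gterms_def by blast
    have "LK1 valid (inst_fm ((X, t) # \<rho>) ` set_mset (\<Gamma> + {#subst1 A x (Var (Meta X)), Exists x A#}))"
      using DI_ex.IH \<rho>' w by blast
    moreover have "inst_fm ((X, t) # \<rho>) ` set_mset (\<Gamma> + {#subst1 A x (Var (Meta X)), Exists x A#})
       = insert (subst1 (inst_fm \<rho> A) x t) (insert (Exists x (inst_fm \<rho> A)) (inst_fm \<rho> ` set_mset \<Gamma>))"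
    proof -
      have "inst_fm ((X, t) # \<rho>) ` set_mset \<Gamma> = inst_fm \<rho> ` set_mset \<Gamma>"
        using fvG inst_other[of X _ t \<rho>] by (auto simp: image_iff)
      moreover have "inst_fm ((X, t) # \<rho>) (Exists x A) = Exists x (inst_fm \<rho> A)"
        using fvG inst_other[of X "Exists x A" t \<rho>] inst_Exists by auto
      moreover have "inst_fm ((X, t) # \<rho>) (subst1 A x (Var (Meta X))) = subst1 (inst_fm \<rho> A) x t"
        using inst_subst1_meta[OF Inst_ground[OF \<rho>] tg nA] .
      ultimately show ?thesis by simp
    qed
    ultimately have "LK1 valid (insert (subst1 (inst_fm \<rho> A) x t) (insert (Exists x (inst_fm \<rho> A)) (inst_fm \<rho> ` set_mset \<Gamma>)))"
      by simp
    then have "LK1 valid (insert (Exists x (inst_fm \<rho> A)) (inst_fm \<rho> ` set_mset \<Gamma>))"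
      by (rule LK1_ex[rotated]) (use tg in blast)
    then show "LK1 valid (inst_fm \<rho> ` set_mset (\<Gamma> + {#Exists x A#}))" by (simp add: inst_Exists)
  qed
next
  case (DI_all y d \<Gamma> x A \<sigma>)
  have sp: "\<sigma> \<in> Psi (DE y # d)" using DI_props[OF M DI_all.hyps(3)] by auto
  have ps: "Psi (DE y # d) = Psi d" using M_DE[OF M DI_all.hyps(1)] .
  have ny: "y \<notin> eigs_of E0 d" using DI_all.hyps(1) by simp
  show ?case
  proof (intro ballI impI)
    fix \<rho> assume \<rho>: "\<rho> \<in> Inst E0 d" and e: "eps d \<rho> \<sigma>"
    have e': "eps (DE y # d) \<rho> \<sigma>" using C_DE[OF C DI_all.hyps(1) \<rho>] sp ps e by auto
    have "LK1 valid (inst_fm \<rho> ` set_mset (\<Gamma> + {#subst1 A x (Var (Eig y))#}))"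
      using DI_all.IH \<rho> e' by simp
    then have L: "LK1 valid (insert (subst1 (inst_fm \<rho> A) x (Var (Eig y))) (inst_fm \<rho> ` set_mset \<Gamma>))"
      by (simp add: inst_subst1_eig[OF Inst_ground[OF \<rho>]])
    have fv: "\<forall>B \<in># \<Gamma> + {#Forall x A#}. Eig y \<notin> fvars (inst_fm \<rho> B)"
    proof
      fix B assume "B \<in># \<Gamma> + {#Forall x A#}"
      then have "fvars (inst_fm \<rho> B) \<subseteq> Eig ` eigs_of E0 d" using fvars_inst[OF \<rho>, of B] DI_all.hyps(2) unfolding ctx_dom_def by auto
      then show "Eig y \<notin> fvars (inst_fm \<rho> B)" using ny by auto
    qed
    have "LK1 valid (insert (Forall x (inst_fm \<rho> A)) (inst_fm \<rho> ` set_mset \<Gamma>))"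
    proof (rule LK1_all[OF _ _ L])
      show "Eig y \<notin> fvars (Forall x (inst_fm \<rho> A))" using fv inst_Forall[of \<rho> x A] by auto
      show "\<forall>B\<in>inst_fm \<rho> ` set_mset \<Gamma>. Eig y \<notin> fvars B" using fv by auto
    qed
    then show "LK1 valid (inst_fm \<rho> ` set_mset (\<Gamma> + {#Forall x A#}))" by (simp add: inst_Forall)
  qed
qed

theorem mainTheorem4:
  fixes E0 :: "nat set"
    and Psi :: "domain \<Rightarrow> 'c set"
    and proj :: "domain \<Rightarrow> 'c \<Rightarrow> 'c"
    and meet :: "domain \<Rightarrow> 'c \<Rightarrow> 'c \<Rightarrow> 'c"
    and eps :: "domain \<Rightarrow> 'f inst \<Rightarrow> 'c \<Rightarrow> bool"
    and beta :: "domain \<Rightarrow> 'c \<Rightarrow> 'f inst \<Rightarrow> 'f trm"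
    and cp :: "domain \<Rightarrow> ('p, 'f) fm set \<Rightarrow> 'c \<Rightarrow> bool"
    and valid :: "('p, 'f) fm set \<Rightarrow> bool"
    and d :: domain
    and \<Gamma> :: "('p, 'f) fm multiset"
    and \<sigma> :: 'c
  assumes "meet_constraint_structure E0 Psi proj meet"
    and "compat_relation E0 Psi proj eps"
    and "distributes_over_meet E0 Psi meet eps"
    and "witness_builder E0 Psi proj eps beta"
    and "relates_to E0 Psi eps cp valid"
    and "wf_dom E0 d"
    and "DI E0 Psi proj meet cp d \<Gamma> \<sigma>"
    and "\<exists>\<rho> \<in> Inst E0 d. eps d \<rho> \<sigma>"
  shows "LK1 valid (inst_fm (fold_c proj beta d \<sigma>) ` set_mset \<Gamma>)"
proof -
  have s: "\<sigma> \<in> Psi d" using DI_props[OF assms(1) assms(7)] by auto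
  obtain \<rho> where "\<rho> \<in> Inst E0 d" "eps d \<rho> \<sigma>" using assms(8) by blast
  then have f: "fold_c proj beta d \<sigma> \<in> Inst E0 d" "eps d (fold_c proj beta d \<sigma>) \<sigma>"
    using fold_lemma[OF assms(2) assms(1) assms(4) assms(6) s] by auto
  show ?thesis using DI_sound[OF assms(1-5) assms(7)] f by blast
qed

end
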